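(* Let $1\le i\le n$. For all $w=t_q\overline w\in W$ (with $q\in M$, $\overline w\in W_0$), $$\mathcal{L}_{\Lambda_i}(w)=\frac{a_i^\vee}{a_0^\vee}\Big(\frac h2|q|^2-\mathrm{ht}(q)\Big)+h\,(\overline w(\omega_i)\,|\,q)+\mathrm{ht}(\omega_i-\overline w(\omega_i)).$$ In particular, $\mathcal{L}_{\Lambda_i}(t_q)=\frac{a_i^\vee}{a_0^\vee}\big(\frac h2|q|^2-\mathrm{ht}(q)\big)+h(\omega_i\,|\,q)$.
   Context: Let $A=(a_{ij})_{0\le i,j\le n}$ be a generalized Cartan matrix of affine type with realization $\Delta=\{\alpha_0,\dots,\alpha_n\}\subset\mathfrak h^*$, $\Delta^\vee\subset\mathfrak h$, $\langle\alpha_j,\alpha_i^\vee\rangle=a_{ij}$. $(a_i)$ and $(a_i^\vee)$ are the primitive positive integer kernel vectors of $A$ and $A^T$; $h=\sum a_i$, $\delta=\sum a_i\alpha_i$, $c=\sum a_i^\vee\alpha_i^\vee$, $\theta=\delta-a_0\alpha_0$. $V_0=\bigoplus_{i\ge1}\mathbb{R}\alpha_i$ with the standard invariant form $(\cdot|\cdot)$ ($(\alpha_i|\alpha_j)=a_i^\vee a_i^{-1}a_{ij}$). $W_0=\langle s_1,\dots,s_n\rangle$, $M=\mathbb{Z}$-span of the $W_0$-orbit of $\theta/a_0$, and $W=\langle s_0,\dots,s_n\rangle=T(M)\rtimes W_0$ where $t_x(v)=v+\langle v,c\rangle x-((v|x)+\frac12|x|^2\langle v,c\rangle)\delta$. $\omega_i$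 are the finite fundamental weights, $\Lambda_i=\frac{a_i^\vee}{a_0^\vee}\Lambda_0+\omega_i$ the affine fundamental weights; $\rho^\vee\in\mathfrak h$ with $\langle\alpha_j,\rho^\vee\rangle=1$ for all $j$. $\mathcal{L}_\Lambda(g)=\langle\Lambda-g\Lambda,\rho^\vee\rangle$. For $x=\sum_{i\ge1}x_i\alpha_i\in V_0$, $\mathrm{ht}(x)=\sum x_i$. *)

theory Defs
  imports "HOL-Analysis.Analysis"
begin

(* Cartan matrix A = (A i j)_{0 <= i,j <= n}; entries outside {0..n} are irrelevant. *)

definition is_gcm :: "nat \<Rightarrow> (nat \<Rightarrow> nat \<Rightarrow> int) \<Rightarrow> bool" where
  "is_gcm n A \<longleftrightarrow> (\<forall>i\<le>n. A i i = 2) \<and>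
     (\<forall>i\<le>n. \<forall>j\<le>n. i \<noteq> j \<longrightarrow> A i j \<le> 0) \<and>
     (\<forall>i\<le>n. \<forall>j\<le>n. A i j = 0 \<longleftrightarrow> A j i = 0)"

definition indecomposable :: "nat \<Rightarrow> (nat \<Rightarrow> nat \<Rightarrow> int) \<Rightarrow> bool" where
  "indecomposable n A \<longleftrightarrow>
     \<not> (\<exists>S. S \<subseteq> {0..n} \<and> S \<noteq> {} \<and> S \<noteq> {0..n} \<and>
            (\<forall>i\<in>S. \<forall>j\<in>{0..n} - S. A i j = 0))"

(* Kac, Infinite dim. Lie algebras, Cor. 4.3: an indecomposable GCM is of affine type
   iff there is a vector u > 0 with A u = 0. *)
definition affine_type :: "nat \<Rightarrow> (nat \<Rightarrow> nat \<Rightarrow> int) \<Rightarrow> bool" where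
  "affine_type n A \<longleftrightarrow> is_gcm n A \<and> indecomposable n A \<and>
     (\<exists>u::nat \<Rightarrow> real. (\<forall>i\<le>n. u i > 0) \<and> (\<forall>i\<le>n. (\<Sum>j\<le>n. of_int (A i j) * u j) = 0))"

definition prim_kernel_vec :: "nat \<Rightarrow> (nat \<Rightarrow> nat \<Rightarrow> int) \<Rightarrow> (nat \<Rightarrow> int) \<Rightarrow> bool" where
  "prim_kernel_vec n A x \<longleftrightarrow> (\<forall>i\<le>n. x i > 0) \<and>
     (\<forall>i\<le>n. (\<Sum>j\<le>n. A i j * x j) = 0) \<and>
     (\<forall>d::int. (\<forall>i\<le>n. d dvd x i) \<longrightarrow> is_unit d)"

definition transp_mat :: "(nat \<Rightarrow> nat \<Rightarrow> int) \<Rightarrow> (nat \<Rightarrow> nat \<Rightarrow> int)" where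
  "transp_mat A = (\<lambda>i j. A j i)"

(* Standard realization of A.
   h^* has basis alpha_0,...,alpha_n, Lambda_0; an element v :: hstar has coordinate
   v j on alpha_j (0 <= j <= n) and v (n+1) on Lambda_0.
   h has basis alpha_0^vee,...,alpha_n^vee, d; an element r :: hvec has coordinate r i on
   alpha_i^vee and r (n+1) on d.
   Pairing: <alpha_j, alpha_i^vee> = a_ij, <Lambda_0, alpha_i^vee> = delta_{i0},
            <alpha_j, d> = delta_{j0}, <Lambda_0, d> = 0. *)
type_synonym hstar = "nat \<Rightarrow> real"
type_synonym hvec = "nat \<Rightarrow> real"

definition alpha :: "nat \<Rightarrow> hstar" where
  "alpha j = (\<lambda>k. if k = j then 1 else 0)"

definition Lam0 :: "nat \<Rightarrow> hstar" where
  "Lam0 n = (\<lambda>k. if k = Suc n then 1 else 0)"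

(* <v, alpha_i^vee> *)
definition copair :: "nat \<Rightarrow> (nat \<Rightarrow> nat \<Rightarrow> int) \<Rightarrow> hstar \<Rightarrow> nat \<Rightarrow> real" where
  "copair n A v i = (\<Sum>j\<le>n. of_int (A i j) * v j) + (if i = 0 then v (Suc n) else 0)"

definition hpair :: "nat \<Rightarrow> (nat \<Rightarrow> nat \<Rightarrow> int) \<Rightarrow> hstar \<Rightarrow> hvec \<Rightarrow> real" where
  "hpair n A v r = (\<Sum>i\<le>n. r i * copair n A v i) + r (Suc n) * v 0"

definition srefl :: "nat \<Rightarrow> (nat \<Rightarrow> nat \<Rightarrow> int) \<Rightarrow> nat \<Rightarrow> hstar \<Rightarrow> hstar" where
  "srefl n A i v = (\<lambda>k. v k - (if k = i then copair n A v i else 0))"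

(* group generated by the s_i, i \<in> I (reflections are involutions, so the generated
   monoid is the generated group) *)
inductive_set refl_group :: "nat \<Rightarrow> (nat \<Rightarrow> nat \<Rightarrow> int) \<Rightarrow> nat set \<Rightarrow> (hstar \<Rightarrow> hstar) set"
  for n A I where
  id_in: "id \<in> refl_group n A I"
| step: "g \<in> refl_group n A I \<Longrightarrow> i \<in> I \<Longrightarrow> srefl n A i \<circ> g \<in> refl_group n A I"

definition weyl :: "nat \<Rightarrow> (nat \<Rightarrow> nat \<Rightarrow> int) \<Rightarrow> (hstar \<Rightarrow> hstar) set" where
  "weyl n A = refl_group n A {0..n}"

definition weyl0 :: "nat \<Rightarrow> (nat \<Rightarrow> nat \<Rightarrow> int) \<Rightarrow> (hstar \<Rightarrow> hstar) set" where
  "weyl0 n A = refl_group n A {1..n}"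

(* Standard invariant form on h^* (Kac 6.2):
   (alpha_i|alpha_j) = a_i^vee a_i^{-1} a_ij, (alpha_i|Lambda_0) = delta_{i0} a_0^vee a_0^{-1},
   (Lambda_0|Lambda_0) = 0. *)
definition invform :: "nat \<Rightarrow> (nat \<Rightarrow> nat \<Rightarrow> int) \<Rightarrow> (nat \<Rightarrow> int) \<Rightarrow> (nat \<Rightarrow> int)
                        \<Rightarrow> hstar \<Rightarrow> hstar \<Rightarrow> real" where
  "invform n A a av u v =
     (\<Sum>i\<le>n. \<Sum>j\<le>n. u i * v j * (of_int (av i) / of_int (a i)) * of_int (A i j))
     + (u (Suc n) * v 0 + u 0 * v (Suc n)) * (of_int (av 0) / of_int (a 0))"

(* <v, c> with c = sum a_i^vee alpha_i^vee *)
definition cpair :: "nat \<Rightarrow> (nat \<Rightarrow> nat \<Rightarrow> int) \<Rightarrow> (nat \<Rightarrow> int) \<Rightarrow> hstar \<Rightarrow> real" where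
  "cpair n A av v = (\<Sum>i\<le>n. of_int (av i) * copair n A v i)"

definition delta :: "nat \<Rightarrow> (nat \<Rightarrow> int) \<Rightarrow> hstar" where
  "delta n a = (\<lambda>k. if k \<le> n then of_int (a k) else 0)"

definition theta :: "nat \<Rightarrow> (nat \<Rightarrow> int) \<Rightarrow> hstar" where
  "theta n a = (\<lambda>k. delta n a k - of_int (a 0) * alpha 0 k)"

(* V_0 = real span of alpha_1, ..., alpha_n *)
definition V0 :: "nat \<Rightarrow> hstar set" where
  "V0 n = {v. v 0 = 0 \<and> (\<forall>k>n. v k = 0)}"

definition latM :: "nat \<Rightarrow> (nat \<Rightarrow> nat \<Rightarrow> int) \<Rightarrow> (nat \<Rightarrow> int) \<Rightarrow> hstar set" where
  "latM n A a = {x. \<exists>(m::nat) (c::nat \<Rightarrow> int) g. (\<forall>k<m. g k \<in> weyl0 n A) \<and>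
       x = (\<lambda>p. \<Sum>k<m. of_int (c k) *
              g k (\<lambda>l. theta n a l / of_int (a 0)) p)}"

definition transl :: "nat \<Rightarrow> (nat \<Rightarrow> nat \<Rightarrow> int) \<Rightarrow> (nat \<Rightarrow> int) \<Rightarrow> (nat \<Rightarrow> int)
                       \<Rightarrow> hstar \<Rightarrow> hstar \<Rightarrow> hstar" where
  "transl n A a av x v = (\<lambda>k. v k + cpair n A av v * x k
      - (invform n A a av v x + 1/2 * invform n A a av x x * cpair n A av v) * delta n a k)"

definition fin_fund_weight :: "nat \<Rightarrow> (nat \<Rightarrow> nat \<Rightarrow> int) \<Rightarrow> nat \<Rightarrow> hstar \<Rightarrow> bool" where
  "fin_fund_weight n A i w \<longleftrightarrow> w \<in> V0 n \<and>
     (\<forall>j\<in>{1..n}. copair n A w j = (if j = i then 1 else 0))"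

definition aff_fund_weight :: "nat \<Rightarrow> (nat \<Rightarrow> int) \<Rightarrow> nat \<Rightarrow> hstar \<Rightarrow> hstar" where
  "aff_fund_weight n av i w = (\<lambda>k. of_int (av i) / of_int (av 0) * Lam0 n k + w k)"

definition is_rho_check :: "nat \<Rightarrow> (nat \<Rightarrow> nat \<Rightarrow> int) \<Rightarrow> hvec \<Rightarrow> bool" where
  "is_rho_check n A r \<longleftrightarrow> (\<forall>j\<le>n. hpair n A (alpha j) r = 1)"

definition Lfun :: "nat \<Rightarrow> (nat \<Rightarrow> nat \<Rightarrow> int) \<Rightarrow> hvec \<Rightarrow> hstar \<Rightarrow> (hstar \<Rightarrow> hstar) \<Rightarrow> real" where
  "Lfun n A r Lam g = hpair n A (\<lambda>k. Lam k - g Lam k) r"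

definition ht :: "nat \<Rightarrow> hstar \<Rightarrow> real" where
  "ht n x = (\<Sum>i\<in>{1..n}. x i)"

definition coxeter :: "nat \<Rightarrow> (nat \<Rightarrow> int) \<Rightarrow> real" where
  "coxeter n a = (\<Sum>i\<le>n. of_int (a i))"

end

theory Submission
  imports Defs
begin

lemma copair_alpha: "j \<le> n \<Longrightarrow> copair n A (alpha j) i = of_int (A i j)"
  unfolding copair_def alpha_def by (simp add: if_distrib cong: if_cong)

lemma hpair_expand:
  "hpair n A v r = (\<Sum>j\<le>n. v j * hpair n A (alpha j) r) + r 0 * v (Suc n)"
proof -
  have e: "\<And>j. j \<le> n \<Longrightarrow> hpair n A (alpha j) r
      = (\<Sum>i\<le>n. r i * of_int (A i j)) + r (Suc n) * (if j = 0 then 1 else 0)"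
    unfolding hpair_def by (simp add: copair_alpha) (simp add: alpha_def)
  have "(\<Sum>j\<le>n. v j * hpair n A (alpha j) r)
      = (\<Sum>j\<le>n. \<Sum>i\<le>n. r i * of_int (A i j) * v j) + (\<Sum>j\<le>n. v j * (r (Suc n) * (if j = 0 then 1 else 0)))"
    by (simp add: e sum.distrib sum_distrib_left sum_distrib_right algebra_simps)
  also have "(\<Sum>j\<le>n. v j * (r (Suc n) * (if j = 0 then 1 else 0))) = r (Suc n) * v 0"
    by (simp add: if_distrib cong: if_cong)
  also have "(\<Sum>j\<le>n. \<Sum>i\<le>n. r i * of_int (A i j) * v j) = (\<Sum>i\<le>n. r i * (\<Sum>j\<le>n. of_int (A i j) * v j))"
    by (subst sum.swap) (simp add: sum_distrib_left mult.assoc)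
  finally have X: "(\<Sum>j\<le>n. v j * hpair n A (alpha j) r) = (\<Sum>i\<le>n. r i * (\<Sum>j\<le>n. of_int (A i j) * v j)) + r (Suc n) * v 0" .
  have "hpair n A v r = (\<Sum>i\<le>n. r i * (\<Sum>j\<le>n. of_int (A i j) * v j) + (if i = 0 then r 0 * v (Suc n) else 0)) + r (Suc n) * v 0"
    unfolding hpair_def copair_def by (intro arg_cong2[where f="(+)"] sum.cong) (auto simp: distrib_left)
  also have "\<dots> = (\<Sum>i\<le>n. r i * (\<Sum>j\<le>n. of_int (A i j) * v j)) + r 0 * v (Suc n) + r (Suc n) * v 0"
    by (simp add: sum.distrib)
  finally show ?thesis using X by simp
qed

lemma cpair_expand:
  assumes kern: "\<forall>j\<le>n. (\<Sum>i\<le>n. of_int (A i j) * of_int (av i) :: real) = 0"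
  shows "cpair n A av v = of_int (av 0) * v (Suc n)"
proof -
  have "cpair n A av v = (\<Sum>i\<le>n. of_int (av i) * (\<Sum>j\<le>n. of_int (A i j) * v j) + (if i = 0 then of_int (av 0) * v (Suc n) else 0))"
    unfolding cpair_def copair_def by (intro sum.cong) (auto simp: distrib_left)
  also have "\<dots> = (\<Sum>i\<le>n. \<Sum>j\<le>n. of_int (A i j) * of_int (av i) * v j) + of_int (av 0) * v (Suc n)"
    by (simp add: sum.distrib sum_distrib_left algebra_simps)
  also have "(\<Sum>i\<le>n. \<Sum>j\<le>n. of_int (A i j) * of_int (av i) * v j) = (\<Sum>j\<le>n. (\<Sum>i\<le>n. of_int (A i j) * of_int (av i)) * v j)"
    by (subst sum.swap) (simp add: sum_distrib_right)
  also have "\<dots> = 0" using kern by simp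
  finally show ?thesis by simp
qed

lemma W1: "g \<in> refl_group n A {1..n} \<Longrightarrow> g v 0 = v 0 \<and> (\<forall>k>n. g v k = v k)"
  by (induction g rule: refl_group.induct) (auto simp: srefl_def)

lemma W2: "g \<in> refl_group n A {1..n} \<Longrightarrow> g (\<lambda>k. c * Lam0 n k + v k) = (\<lambda>k. c * Lam0 n k + g v k)"
proof (induction g rule: refl_group.induct)
  case id_in
  then show ?case by simp
next
  case (step g i)
  have "copair n A (\<lambda>k. c * Lam0 n k + g v k) i = copair n A (g v) i"
    using step.hyps(2) unfolding copair_def Lam0_def by (auto intro!: sum.cong)
  then show ?case by (simp add: srefl_def step.IH fun_eq_iff)
qed

lemma sum_ht: "f 0 = 0 \<Longrightarrow> (\<Sum>j\<le>n. f j) = ht n f"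
proof -
  assume "f 0 = 0"
  have "{..n} = insert 0 {1..n}" by auto
  then show ?thesis using \<open>f 0 = 0\<close> unfolding ht_def by simp
qed

lemma mainlem:
  assumes kern: "\<forall>j\<le>n. (\<Sum>i\<le>n. of_int (A i j) * of_int (av i) :: real) = 0"
    and av0: "av 0 = 1" and om: "om \<in> V0 n" and rho: "is_rho_check n A rho"
    and wb: "wb \<in> weyl0 n A" and q0: "q 0 = 0" and qn: "q (Suc n) = 0"
  shows "Lfun n A rho (aff_fund_weight n av i om) (transl n A a av q \<circ> wb) =
              of_int (av i) / of_int (av 0) *
                (coxeter n a / 2 * invform n A a av q q - ht n q)
              + coxeter n a * invform n A a av (wb om) q
              + ht n (\<lambda>k. om k - wb om k)"
proof -
  define L where "L = real_of_int (av i)"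
  define u where "u = wb om"
  have wbg: "wb \<in> refl_group n A {1..n}" using wb unfolding weyl0_def .
  have Lam: "aff_fund_weight n av i om = (\<lambda>k. L * Lam0 n k + om k)"
    unfolding aff_fund_weight_def L_def using av0 by simp
  have wbL: "wb (aff_fund_weight n av i om) = (\<lambda>k. L * Lam0 n k + u k)"
    unfolding Lam u_def by (rule W2[OF wbg])
  have om0: "om 0 = 0" and omn: "om (Suc n) = 0" using om unfolding V0_def by auto
  have u0: "u 0 = 0" and un: "u (Suc n) = 0" using W1[OF wbg, of om] om0 omn unfolding u_def by auto
  have cp: "cpair n A av (\<lambda>k. L * Lam0 n k + u k) = L"
    using cpair_expand[OF kern] av0 un by (simp add: Lam0_def)
  have inv: "invform n A a av (\<lambda>k. L * Lam0 n k + u k) q = invform n A a av u q"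
    unfolding invform_def using q0 qn u0 un by (auto simp: Lam0_def intro!: sum.cong)
  define X where "X = invform n A a av u q + 1/2 * invform n A a av q q * L"
  define v where "v = (\<lambda>k. aff_fund_weight n av i om k - (transl n A a av q \<circ> wb) (aff_fund_weight n av i om) k)"
  have v: "v = (\<lambda>k. L * Lam0 n k + om k - (L * Lam0 n k + u k + L * q k - X * delta n a k))"
    unfolding v_def o_def wbL transl_def cp inv X_def by (simp add: Lam)
  have "Lfun n A rho (aff_fund_weight n av i om) (transl n A a av q \<circ> wb) = hpair n A v rho"
    unfolding Lfun_def v_def ..
  also have "\<dots> = (\<Sum>j\<le>n. v j) + rho 0 * v (Suc n)"
    using rho unfolding is_rho_check_def by (simp add: hpair_expand[of n A v rho])
  also have "v (Suc n) = 0" unfolding v using omn un qn by (simp add: delta_def)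
  also have "(\<Sum>j\<le>n. v j) = (\<Sum>j\<le>n. om j - u j) - L * (\<Sum>j\<le>n. q j) + X * (\<Sum>j\<le>n. of_int (a j))"
    unfolding v by (simp add: Lam0_def delta_def sum.distrib sum_subtractf sum_distrib_left algebra_simps)
  also have "(\<Sum>j\<le>n. om j - u j) = ht n (\<lambda>k. om k - u k)" using om0 u0 by (intro sum_ht) simp
  also have "(\<Sum>j\<le>n. q j) = ht n q" using q0 by (rule sum_ht)
  finally show ?thesis unfolding X_def coxeter_def u_def[symmetric] L_def[symmetric] using av0
    by (simp add: algebra_simps o_def)
qed

lemma latM_V0:
  assumes "x \<in> latM n A a" shows "x 0 = 0 \<and> x (Suc n) = 0"
  using assms unfolding latM_def
proof (elim CollectE exE conjE)
  fix m c g assume g: "\<forall>k<m. g k \<in> weyl0 n A" and x: "x = (\<lambda>p. \<Sum>k<m. of_int (c k) *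
              g k (\<lambda>l. theta n a l / of_int (a 0)) p)"
  have t: "(\<lambda>l. theta n a l / of_int (a 0)) 0 = 0" "(\<lambda>l. theta n a l / of_int (a 0)) (Suc n) = 0"
    by (auto simp: theta_def delta_def alpha_def)
  have "\<And>k. k < m \<Longrightarrow> g k (\<lambda>l. theta n a l / of_int (a 0)) 0 = 0 \<and> g k (\<lambda>l. theta n a l / of_int (a 0)) (Suc n) = 0"
    using W1 g t unfolding weyl0_def by (metis lessI)
  then show ?thesis unfolding x by simp
qed

theorem proposition2p2:
  fixes n i :: nat and A :: "nat \<Rightarrow> nat \<Rightarrow> int" and a av :: "nat \<Rightarrow> int"
    and om :: hstar and rho :: hvec
  assumes "affine_type n A"
    and "prim_kernel_vec n A a"
    and "prim_kernel_vec n (transp_mat A) av"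
    and "av 0 = 1"
    and "1 \<le> i" and "i \<le> n"
    and "fin_fund_weight n A i om"
    and "is_rho_check n A rho"
  shows "(\<forall>w q wb. w \<in> weyl n A \<longrightarrow> q \<in> latM n A a \<longrightarrow> wb \<in> weyl0 n A \<longrightarrow>
            w = transl n A a av q \<circ> wb \<longrightarrow>
            Lfun n A rho (aff_fund_weight n av i om) w =
              of_int (av i) / of_int (av 0) *
                (coxeter n a / 2 * invform n A a av q q - ht n q)
              + coxeter n a * invform n A a av (wb om) q
              + ht n (\<lambda>k. om k - wb om k))
       \<and> (\<forall>q. q \<in> latM n A a \<longrightarrow> transl n A a av q \<in> weyl n A \<longrightarrow>
            Lfun n A rho (aff_fund_weight n av i om) (transl n A a av q) =
              of_int (av i) / of_int (av 0) *
                (coxeter n a / 2 * invform n A a av q q - ht n q)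
              + coxeter n a * invform n A a av om q)"
proof -
  have kern: "\<forall>j\<le>n. (\<Sum>i\<le>n. of_int (A i j) * of_int (av i) :: real) = 0"
  proof (intro allI impI)
    fix j assume "j \<le> n"
    then have "(\<Sum>i\<le>n. A i j * av i) = 0"
      using assms(3) unfolding prim_kernel_vec_def transp_mat_def by auto
    then have "real_of_int (\<Sum>i\<le>n. A i j * av i) = 0" by simp
    then show "(\<Sum>i\<le>n. of_int (A i j) * of_int (av i) :: real) = 0" by simp
  qed
  have om: "om \<in> V0 n" using assms(7) unfolding fin_fund_weight_def by simp
  have idw: "id \<in> weyl0 n A" unfolding weyl0_def by (rule refl_group.id_in)
  show ?thesis
  proof (intro conjI allI impI)
    fix w q wb assume "w \<in> weyl n A" "q \<in> latM n A a" "wb \<in> weyl0 n A" "w = transl n A a av q \<circ> wb"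
    then show "Lfun n A rho (aff_fund_weight n av i om) w =
              of_int (av i) / of_int (av 0) *
                (coxeter n a / 2 * invform n A a av q q - ht n q)
              + coxeter n a * invform n A a av (wb om) q
              + ht n (\<lambda>k. om k - wb om k)"
      using mainlem[OF kern assms(4) om assms(8)] latM_V0 by blast
  next
    fix q assume q: "q \<in> latM n A a"
    show "Lfun n A rho (aff_fund_weight n av i om) (transl n A a av q) =
              of_int (av i) / of_int (av 0) *
                (coxeter n a / 2 * invform n A a av q q - ht n q)
              + coxeter n a * invform n A a av om q"
      using mainlem[OF kern assms(4) om assms(8) idw, where q=q] latM_V0[OF q] by (simp add: ht_def)
  qed
qed

end
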